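(* Let $\gamma>0$, $\lambda_k\coloneqq-\gamma+ik$ for $k\in\mathbb{N}$, and let $A$ be the diagonal operator on $\ell^2$ given by $A(\zeta_k)=(\lambda_k\zeta_k)$ with domain $D(A)=\{(\zeta_k)\in\ell^2:(\lambda_k\zeta_k)\in\ell^2\}$. Let $A_d\coloneqq(I+A)(I-A)^{-1}$. Then for every $0<\alpha\le1$, \[ \liminf_{n\to\infty}n^{\alpha}\big\|A_d^{\,n^2}(-A)^{-\alpha}\big\|\ge e^{-2\gamma}, \] and moreover there exist $M>0$ and $n_0\in\mathbb{N}$ such that $\|A_d^{\,n}A^{-1}\|\le M/\sqrt{n}$ for all $n\ge n_0$.
   Context: For this diagonal operator, $A_d^{\,n}(-A)^{-\alpha}$ is the diagonal operator with entries $\big(\frac{1+\lambda_k}{1-\lambda_k}\big)^n(-\lambda_k)^{-\alpha}$ (principal branch). *)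

theory Defs
  imports "HOL-Analysis.Analysis"
begin

definition l2 :: "(nat \<Rightarrow> complex) set" where
  "l2 = {z. summable (\<lambda>k. (cmod (z k))\<^sup>2)}"

definition l2norm :: "(nat \<Rightarrow> complex) \<Rightarrow> real" where
  "l2norm z = sqrt (\<Sum>k. (cmod (z k))\<^sup>2)"

definition diag_opnorm :: "(nat \<Rightarrow> complex) \<Rightarrow> real" where
  "diag_opnorm d = (SUP z \<in> {z \<in> l2. l2norm z \<le> 1}. l2norm (\<lambda>k. d k * z k))"

definition lam :: "real \<Rightarrow> nat \<Rightarrow> complex" where
  "lam \<gamma> k = complex_of_real (- \<gamma>) + \<i> * of_nat k"

definition Ad_entry :: "real \<Rightarrow> nat \<Rightarrow> complex" where
  "Ad_entry \<gamma> k = (1 + lam \<gamma> k) / (1 - lam \<gamma> k)"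

end

theory Submission
  imports Defs "HOL-Real_Asymp.Real_Asymp"
begin


lemma diag_bounds:
  fixes d :: "nat \<Rightarrow> complex" and B :: real and j :: nat
  assumes B: "\<And>k. cmod (d k) \<le> B"
  shows "diag_opnorm d \<le> B" "cmod (d j) \<le> diag_opnorm d"
proof -
  have B0: "0 \<le> B" using B[of 0] norm_ge_zero order_trans by blast
  have up: "l2norm (\<lambda>k. d k * z k) \<le> B" if "z \<in> l2" "l2norm z \<le> 1" for z
  proof -
    have s: "summable (\<lambda>k. (cmod (z k))\<^sup>2)" using that by (simp add: l2_def)
    have le: "(cmod (d k * z k))\<^sup>2 \<le> B\<^sup>2 * (cmod (z k))\<^sup>2" for k
      by (simp add: norm_mult power_mult_distrib B mult_right_mono power_mono)
    have s2: "summable (\<lambda>k. (cmod (d k * z k))\<^sup>2)"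
      by (rule summable_comparison_test'[where g="\<lambda>k. B\<^sup>2 * (cmod (z k))\<^sup>2"])
         (use s le in auto)
    have "(\<Sum>k. (cmod (d k * z k))\<^sup>2) \<le> (\<Sum>k. B\<^sup>2 * (cmod (z k))\<^sup>2)"
      by (rule suminf_le) (use s s2 le in auto)
    also have "\<dots> = B\<^sup>2 * (\<Sum>k. (cmod (z k))\<^sup>2)" using s by (rule suminf_mult)
    also have "\<dots> \<le> B\<^sup>2"
    proof -
      have "(\<Sum>k. (cmod (z k))\<^sup>2) \<ge> 0" by (intro suminf_nonneg s) auto
      moreover have "sqrt (\<Sum>k. (cmod (z k))\<^sup>2) \<le> 1" using that by (simp add: l2norm_def)
      ultimately have "(\<Sum>k. (cmod (z k))\<^sup>2) \<le> 1" by simp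
      thus ?thesis by (simp add: mult_left_le)
    qed
    finally show ?thesis unfolding l2norm_def using B0 real_sqrt_le_mono[of _ "B\<^sup>2"] by fastforce
  qed
  have ne: "{z \<in> l2. l2norm z \<le> 1} \<noteq> {}"
  proof -
    have "(\<lambda>_. 0::complex) \<in> {z \<in> l2. l2norm z \<le> 1}" by (simp add: l2_def l2norm_def)
    thus ?thesis by blast
  qed
  show "diag_opnorm d \<le> B" unfolding diag_opnorm_def
    by (rule cSUP_least[OF ne]) (use up in auto)
  show "cmod (d j) \<le> diag_opnorm d" for j
  proof -
  define e where "e = (\<lambda>k. if k = j then (1::complex) else 0)"
  have es: "(\<lambda>k. (cmod (e k))\<^sup>2) = (\<lambda>k. if k = j then 1 else 0)" by (auto simp: e_def)
  have "(\<lambda>k. (cmod (e k))\<^sup>2) sums 1" unfolding es using sums_single[of j "\<lambda>_. 1::real"] by simp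
  hence e1: "e \<in> l2" "l2norm e = 1" by (auto simp: l2_def l2norm_def sums_iff)
  have es2: "(\<lambda>k. (cmod (d k * e k))\<^sup>2) = (\<lambda>k. if k = j then (cmod (d j))\<^sup>2 else 0)"
    by (auto simp: e_def)
  have "l2norm (\<lambda>k. d k * e k) = cmod (d j)"
    unfolding l2norm_def es2 using sums_single[of j "\<lambda>_. (cmod (d j))\<^sup>2"] by (simp add: sums_iff)
  moreover have "l2norm (\<lambda>k. d k * e k) \<le> diag_opnorm d" unfolding diag_opnorm_def
    by (rule cSUP_upper) (use e1 up in \<open>auto intro!: bdd_aboveI2\<close>)
  ultimately show "cmod (d j) \<le> diag_opnorm d" by simp
  qed
qed



lemma cmod_sq: "(cmod (complex_of_real a + \<i> * of_nat k))\<^sup>2 = a\<^sup>2 + (real k)\<^sup>2"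
  by (simp add: cmod_power2)

lemma cmod_sq': "(cmod (complex_of_real a - \<i> * of_nat k))\<^sup>2 = a\<^sup>2 + (real k)\<^sup>2"
  by (simp add: cmod_power2)

lemma lam_sq: "(cmod (lam g k))\<^sup>2 = g\<^sup>2 + (real k)\<^sup>2"
  unfolding lam_def using cmod_sq[of "-g" k] by simp

lemma Ad_sq: "(cmod (Ad_entry g k))\<^sup>2 = ((1-g)\<^sup>2 + (real k)\<^sup>2) / ((1+g)\<^sup>2 + (real k)\<^sup>2)"
proof -
  have a: "(cmod (1 + lam g k))\<^sup>2 = (1-g)\<^sup>2 + (real k)\<^sup>2" by (simp add: lam_def cmod_power2)
  have b: "(cmod (1 - lam g k))\<^sup>2 = (1+g)\<^sup>2 + (real k)\<^sup>2" by (simp add: lam_def cmod_power2)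
  show ?thesis unfolding Ad_entry_def norm_divide power_divide a b ..
qed

lemma lim1: "(\<lambda>n::nat. ((real n)\<^sup>2 / (g\<^sup>2 + (real n)\<^sup>2)) powr (a/2)) \<longlonglongrightarrow> 1"
proof -
  have "(\<lambda>n::nat. (real n)\<^sup>2 / (g\<^sup>2 + (real n)\<^sup>2)) \<longlonglongrightarrow> 1" by real_asymp
  from tendsto_powr[OF this tendsto_const, of "a/2"] show ?thesis by simp
qed



lemma key1:
  fixes g :: real and n :: nat
  assumes g: "g > 0" and n: "n \<ge> 1"
  shows "cmod (Ad_entry g n) ^ (n\<^sup>2) \<ge> exp (-2*g)"
proof -
  define a where "a = (1-g)\<^sup>2 + (real n)\<^sup>2"
  define b where "b = (1+g)\<^sup>2 + (real n)\<^sup>2"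
  have nn: "(real n)\<^sup>2 \<ge> 1" using n by simp
  have a0: "a > 0" unfolding a_def using nn by (smt (verit) zero_le_power2)
  have ba: "b = a + 4*g" unfolding a_def b_def by (simp add: power2_eq_square algebra_simps)
  have "b/a = 1 + 4*g/a" using a0 ba by (simp add: field_simps)
  hence "(b/a)^(n\<^sup>2) \<le> exp (4*g/a) ^ (n\<^sup>2)"
    using a0 g by (intro power_mono) (auto simp: add_sign_intros)
  also have "\<dots> = exp (real (n\<^sup>2) * (4*g/a))" by (rule exp_of_nat_mult[symmetric])
  also have "\<dots> \<le> exp (4*g)"
  proof -
    have "real (n\<^sup>2) \<le> a" unfolding a_def by simp
    hence "real (n\<^sup>2) / a \<le> 1" using a0 by simp
    hence "(real (n\<^sup>2) / a) * (4*g) \<le> 1 * (4*g)" using g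
      by (intro mult_right_mono) auto
    hence "real (n\<^sup>2) * (4*g/a) \<le> 4*g" by simp
    thus ?thesis by simp
  qed
  finally have 1: "(b/a)^(n\<^sup>2) \<le> exp (4*g)" .
  have "(cmod (Ad_entry g n) ^ (n\<^sup>2))\<^sup>2 = (a/b)^(n\<^sup>2)"
  proof -
    have sw: "(x^m)\<^sup>2 = (x\<^sup>2)^m" for x :: real and m by (metis power_mult mult.commute)
    show ?thesis unfolding sw Ad_sq a_def b_def ..
  qed
  also have "(a/b)^(n\<^sup>2) = inverse ((b/a)^(n\<^sup>2))" by (simp add: power_inverse[symmetric])
  also have "\<dots> \<ge> inverse (exp (4*g))"
    using 1 a0 ba g by (intro le_imp_inverse_le) auto
  finally have "(exp (-2*g))\<^sup>2 \<le> (cmod (Ad_entry g n) ^ (n\<^sup>2))\<^sup>2"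
    by (simp add: exp_minus[symmetric] power2_eq_square exp_add[symmetric])
  thus ?thesis by (rule power2_le_imp_le) simp
qed

lemma key2:
  fixes g :: real and n k :: nat
  assumes g: "g > 0" and n: "n \<ge> 1"
  shows "(cmod (Ad_entry g k ^ n * inverse (lam g k)))\<^sup>2 * real n \<le> (1+g)\<^sup>2 / (4*g^3)"
proof -
  define a where "a = (1-g)\<^sup>2 + (real k)\<^sup>2"
  define b where "b = (1+g)\<^sup>2 + (real k)\<^sup>2"
  define t where "t = g\<^sup>2 + (real k)\<^sup>2"
  have "(1+g)\<^sup>2 > 0" using g by simp
  hence b0: "b > 0" unfolding b_def by (simp add: add_pos_nonneg)
  have t0: "t > 0" unfolding t_def using g by (smt (verit) zero_le_power2 zero_less_power)
  have a0: "a \<ge> 0" unfolding a_def by simp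
  have ba: "a/b = 1 - 4*g/b" unfolding a_def b_def using b0 b_def
    by (simp add: field_simps power2_eq_square)
  have e: "a/b \<le> exp (-(4*g/b))" using ba exp_ge_add_one_self[of "-(4*g/b)"] by simp
  have "(a/b)^n \<le> exp (-(4*g/b))^n"
    using a0 b0 by (intro power_mono[OF e]) auto
  also have "\<dots> = exp (-(real n * (4*g/b)))" by (simp add: exp_of_nat_mult[symmetric])
  also have "\<dots> = inverse (exp (real n * (4*g/b)))" by (simp add: exp_minus)
  also have "\<dots> \<le> inverse (1 + real n * (4*g/b))"
    using g b0 by (intro le_imp_inverse_le) (auto intro!: add_pos_nonneg)
  also have "\<dots> = b / (b + 4*g*real n)" using b0 by (simp add: field_simps)
  finally have p: "(a/b)^n \<le> b / (b + 4*g*real n)" .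
  have sw: "(x^n)\<^sup>2 = (x\<^sup>2)^n" for x :: real by (metis power_mult mult.commute)
  have "(cmod (Ad_entry g k ^ n * inverse (lam g k)))\<^sup>2
        = (cmod (Ad_entry g k) ^ n)\<^sup>2 * (inverse (cmod (lam g k)))\<^sup>2"
    by (simp add: norm_mult norm_power norm_inverse power_mult_distrib)
  also have "\<dots> = (a/b)^n / t"
    unfolding sw power_inverse Ad_sq lam_sq a_def b_def t_def by (simp add: divide_inverse)
  finally have "(cmod (Ad_entry g k ^ n * inverse (lam g k)))\<^sup>2 = (a/b)^n / t" .
  hence "(cmod (Ad_entry g k ^ n * inverse (lam g k)))\<^sup>2 * real n = (a/b)^n * real n / t" by simp
  also have "\<dots> \<le> b / (b + 4*g*real n) * real n / t"
    using p t0 by (intro divide_right_mono mult_right_mono) auto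
  also have "\<dots> \<le> b / (4*g*real n) * real n / t"
    using t0 b0 g n by (intro divide_right_mono mult_right_mono divide_left_mono) (auto intro!: mult_pos_pos add_pos_pos)
  also have "\<dots> = b / (4*g*t)" using n g by (simp add: field_simps)
  also have "\<dots> \<le> (1+g)\<^sup>2 / (4*g^3)"
  proof -
    have "b * g\<^sup>2 \<le> (1+g)\<^sup>2 * t" unfolding b_def t_def
      using g by (simp add: algebra_simps power2_eq_square mult_right_mono)
    hence "b * g\<^sup>2 / (4*g^3*t) \<le> (1+g)\<^sup>2 * t / (4*g^3*t)"
      using g t0 by (intro divide_right_mono) auto
    moreover have "b * g\<^sup>2 / (4*g^3*t) = b / (4*g*t)"
      using g t0 by (simp add: power2_eq_square power3_eq_cube)
    moreover have "(1+g)\<^sup>2 * t / (4*g^3*t) = (1+g)\<^sup>2 / (4*g^3)"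
      using g t0 by simp
    ultimately show ?thesis by simp
  qed
  finally show ?thesis .
qed


lemma lim2:
  fixes g a :: real
  shows "(\<lambda>n::nat. (real n / cmod (lam g n)) powr a) \<longlonglongrightarrow> 1"
proof -
  have c: "cmod (lam g n) = sqrt (g\<^sup>2 + (real n)\<^sup>2)" for n
  proof -
    have "cmod (lam g n) = sqrt ((cmod (lam g n))\<^sup>2)" by simp
    thus ?thesis unfolding lam_sq .
  qed
  have "(\<lambda>n::nat. real n / sqrt (g\<^sup>2 + (real n)\<^sup>2)) \<longlonglongrightarrow> 1" by real_asymp
  from tendsto_powr[OF this tendsto_const, of a] show ?thesis by (simp add: c)
qed

lemma lam_ge: "g > 0 \<Longrightarrow> cmod (lam g k) \<ge> g"
proof -
  assume g: "g > 0"
  have "g\<^sup>2 \<le> (cmod (lam g k))\<^sup>2" by (simp add: lam_sq)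
  thus ?thesis by (rule power2_le_imp_le[OF _ norm_ge_zero])
qed

lemma Ad_le1: "g > 0 \<Longrightarrow> cmod (Ad_entry g k) \<le> 1"
proof -
  assume g: "g > 0"
  have p: "(1+g)\<^sup>2 > 0" using g by (intro zero_less_power) auto
  have b0: "(1+g)\<^sup>2 + (real k)\<^sup>2 > 0" by (rule add_pos_nonneg[OF p zero_le_power2])
  have "(1-g)\<^sup>2 \<le> (1+g)\<^sup>2" using g by (simp add: power2_eq_square algebra_simps)
  hence "(1-g)\<^sup>2 + (real k)\<^sup>2 \<le> (1+g)\<^sup>2 + (real k)\<^sup>2" by (rule add_right_mono)
  hence "((1-g)\<^sup>2 + (real k)\<^sup>2) / ((1+g)\<^sup>2 + (real k)\<^sup>2) \<le> 1"
    using divide_le_eq_1_pos[OF b0] by blast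
  hence "(cmod (Ad_entry g k))\<^sup>2 \<le> 1\<^sup>2" unfolding Ad_sq by simp
  thus ?thesis by (rule power2_le_imp_le) simp
qed

lemma part1:
  fixes \<gamma> \<alpha> :: real
  assumes g: "\<gamma> > 0" and a: "0 < \<alpha>" "\<alpha> \<le> 1"
  shows "Liminf sequentially (\<lambda>n::nat. ereal (real n powr \<alpha> *
              diag_opnorm (\<lambda>k. Ad_entry \<gamma> k ^ (n\<^sup>2) * (- lam \<gamma> k) powr (- complex_of_real \<alpha>))))
           \<ge> ereal (exp (- 2 * \<gamma>))"
proof -
  define h where "h n = exp (-2*\<gamma>) * (real n / cmod (lam \<gamma> n)) powr \<alpha>" for n :: nat
  have nl: "cmod ((- lam \<gamma> k) powr (- complex_of_real \<alpha>)) = cmod (lam \<gamma> k) powr (-\<alpha>)" for k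
    by (subst norm_powr_real_powr') auto
  have ev: "eventually (\<lambda>n. ereal (h n) \<le> ereal (real n powr \<alpha> *
              diag_opnorm (\<lambda>k. Ad_entry \<gamma> k ^ (n\<^sup>2) * (- lam \<gamma> k) powr (- complex_of_real \<alpha>)))) sequentially"
    using eventually_ge_at_top[of "1::nat"]
  proof eventually_elim
    case (elim n)
    define d where "d k = Ad_entry \<gamma> k ^ (n\<^sup>2) * (- lam \<gamma> k) powr (- complex_of_real \<alpha>)" for k
    have lp: "cmod (lam \<gamma> k) > 0" for k using lam_ge[OF g, of k] g by linarith
    have B: "cmod (d k) \<le> \<gamma> powr (-\<alpha>)" for k
    proof -
      have "cmod (d k) = cmod (Ad_entry \<gamma> k) ^ (n\<^sup>2) * cmod (lam \<gamma> k) powr (-\<alpha>)"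
        by (simp add: d_def norm_mult norm_power nl)
      also have "\<dots> \<le> 1 * cmod (lam \<gamma> k) powr (-\<alpha>)"
        by (intro mult_right_mono) (auto simp: power_le_one Ad_le1[OF g])
      also have "\<dots> \<le> \<gamma> powr (-\<alpha>)"
        using lam_ge[OF g, of k] g a lp by (simp add: powr_minus_divide powr_mono2 divide_left_mono)
      finally show ?thesis .
    qed
    have "h n \<le> real n powr \<alpha> * cmod (d n)"
    proof -
      have "h n = real n powr \<alpha> * exp (-2*\<gamma>) * cmod (lam \<gamma> n) powr (-\<alpha>)"
        unfolding h_def using lp[of n] by (simp add: powr_divide powr_minus_divide)
      also have "\<dots> \<le> real n powr \<alpha> * cmod (Ad_entry \<gamma> n) ^ (n\<^sup>2) * cmod (lam \<gamma> n) powr (-\<alpha>)"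
        using key1[OF g elim] by (intro mult_right_mono mult_left_mono) auto
      also have "\<dots> = real n powr \<alpha> * cmod (d n)"
        by (simp add: d_def norm_mult norm_power nl)
      finally show ?thesis .
    qed
    also have "\<dots> \<le> real n powr \<alpha> * diag_opnorm d"
      by (intro mult_left_mono diag_bounds(2)[OF B]) auto
    finally show ?case unfolding d_def by simp
  qed
  have "(\<lambda>n. ereal (h n)) \<longlonglongrightarrow> ereal (exp (-2*\<gamma>) * 1)"
    unfolding h_def by (intro tendsto_intros lim2)
  hence "Liminf sequentially (\<lambda>n. ereal (h n)) = ereal (exp (-2*\<gamma>))"
    by (simp add: lim_imp_Liminf)
  with Liminf_mono[OF ev] show ?thesis by simp
qed

lemma part2:
  fixes \<gamma> :: real
  assumes g: "\<gamma> > 0"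
  shows "\<exists>M::real. M > 0 \<and> (\<exists>n0::nat. \<forall>n\<ge>n0.
           diag_opnorm (\<lambda>k. Ad_entry \<gamma> k ^ n * inverse (lam \<gamma> k)) \<le> M / sqrt (real n))"
proof (intro exI conjI allI impI)
  define M where "M = sqrt ((1+\<gamma>)\<^sup>2 / (4*\<gamma>^3))"
  show "M > 0" unfolding M_def using g by simp
  fix n :: nat assume n: "n \<ge> 1"
  show "diag_opnorm (\<lambda>k. Ad_entry \<gamma> k ^ n * inverse (lam \<gamma> k)) \<le> M / sqrt (real n)"
  proof (rule diag_bounds(1))
    fix k
    have "cmod (Ad_entry \<gamma> k ^ n * inverse (lam \<gamma> k)) * sqrt (real n)
          = sqrt ((cmod (Ad_entry \<gamma> k ^ n * inverse (lam \<gamma> k)))\<^sup>2 * real n)"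
      by (simp add: real_sqrt_mult)
    also have "\<dots> \<le> M" unfolding M_def using key2[OF g n, of k] by (rule real_sqrt_le_mono)
    finally show "cmod (Ad_entry \<gamma> k ^ n * inverse (lam \<gamma> k)) \<le> M / sqrt (real n)"
      using n by (simp add: field_simps)
  qed
qed

theorem mainTheorem9:
  fixes \<gamma> :: real
  assumes "\<gamma> > 0"
  shows "(\<forall>\<alpha>::real. 0 < \<alpha> \<and> \<alpha> \<le> 1 \<longrightarrow>
           Liminf sequentially (\<lambda>n::nat. ereal (real n powr \<alpha> *
              diag_opnorm (\<lambda>k. Ad_entry \<gamma> k ^ (n\<^sup>2) * (- lam \<gamma> k) powr (- complex_of_real \<alpha>))))
           \<ge> ereal (exp (- 2 * \<gamma>)))
       \<and> (\<exists>M::real. M > 0 \<and> (\<exists>n0::nat. \<forall>n\<ge>n0.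
           diag_opnorm (\<lambda>k. Ad_entry \<gamma> k ^ n * inverse (lam \<gamma> k)) \<le> M / sqrt (real n)))"
  using part1[OF assms] part2[OF assms] by blast

end
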